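(* For every $n\ge1$, letting $\mathcal{A}^{(1)}_m$ denote the set of $1$-almost-increasing permutations in $S_m$, $$\mathcal{A}^{(1)}_{n+1}=\rho_{1,1}(\mathcal{A}^{(1)}_n)\cup\rho_{1,2}(\mathcal{A}^{(1)}_n)\cup\rho_{2,1}(\mathcal{A}^{(1)}_n)\cup\rho_{2,2}(\mathcal{A}^{(1)}_n).$$
   Context: A permutation $\pi\in S_m$ (one-line form) is $1$-almost-increasing if for every $i\in\{1,\dots,m\}$ there is at most one $j\le i$ with $\pi_j>i$; equivalently, $\pi$ avoids $4321,4312,3421,3412$. For $\pi\in S_n$ and $1\le i,j\le n+1$, $\rho_{i,j}(\pi)\in S_{n+1}$ is obtained by increasing by $1$ every entry of $\pi$ that is $\ge i$ and then inserting the value $i$ so that it occupies position $j$. *)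

theory Defs
  imports Main
begin

text \<open>A permutation in S_m in one-line form: list of length m whose entries are exactly 1..m.
  Position j (1-based) holds the entry xs ! (j - 1).\<close>
definition perm_S :: "nat \<Rightarrow> nat list \<Rightarrow> bool" where
  "perm_S m xs \<longleftrightarrow> length xs = m \<and> distinct xs \<and> set xs = {1..m}"

definition almost_inc1 :: "nat list \<Rightarrow> bool" where
  "almost_inc1 xs \<longleftrightarrow>
     (\<forall>i\<in>{1..length xs}. card {j\<in>{1..i}. xs ! (j - 1) > i} \<le> 1)"

definition A1 :: "nat \<Rightarrow> nat list set" where
  "A1 m = {xs. perm_S m xs \<and> almost_inc1 xs}"

definition rho :: "nat \<Rightarrow> nat \<Rightarrow> nat list \<Rightarrow> nat list" where
  "rho i j xs = (let ys = map (\<lambda>x. if x \<ge> i then x + 1 else x) xs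
                 in take (j - 1) ys @ [i] @ drop (j - 1) ys)"

end

theory Submission
  imports Defs
begin

definition sh :: "nat \<Rightarrow> nat \<Rightarrow> nat" where "sh v x = (if v \<le> x then x + 1 else x)"
definition un :: "nat \<Rightarrow> nat \<Rightarrow> nat" where "un v x = (if v < x then x - 1 else x)"

definition cnt :: "nat list \<Rightarrow> nat \<Rightarrow> nat" where
  "cnt xs i = length (filter (\<lambda>x. i < x) (take i xs))"

lemma card_eq_cnt:
  assumes "i \<le> length xs"
  shows "card {j\<in>{1..i}. xs ! (j - 1) > i} = cnt xs i"
proof -
  have "{j\<in>{1..i}. xs ! (j - 1) > i} = Suc ` {k. k < length (take i xs) \<and> i < take i xs ! k}"
  proof (rule set_eqI, rule iffI)
    fix j assume "j \<in> {j\<in>{1..i}. xs ! (j - 1) > i}"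
    then have j: "1 \<le> j" "j \<le> i" "i < xs ! (j - 1)" by auto
    then have "j = Suc (j - 1)" "j - 1 < length (take i xs)" "take i xs ! (j - 1) = xs ! (j - 1)"
      using assms by auto
    then show "j \<in> Suc ` {k. k < length (take i xs) \<and> i < take i xs ! k}"
      using j by (metis (mono_tags, lifting) image_eqI mem_Collect_eq)
  next
    fix j assume "j \<in> Suc ` {k. k < length (take i xs) \<and> i < take i xs ! k}"
    then obtain k where k: "j = Suc k" "k < length (take i xs)" "i < take i xs ! k" by auto
    then show "j \<in> {j\<in>{1..i}. xs ! (j - 1) > i}" by auto
  qed
  then have "card {j\<in>{1..i}. xs ! (j - 1) > i} = card {k. k < length (take i xs) \<and> i < take i xs ! k}"
    by (simp add: card_image)
  then show ?thesis unfolding cnt_def by (simp add: length_filter_conv_card)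
qed

lemma ai_cnt: "almost_inc1 xs \<longleftrightarrow> (\<forall>i\<in>{1..length xs}. cnt xs i \<le> 1)"
  unfolding almost_inc1_def using card_eq_cnt by auto

lemma rho1: "rho v 1 xs = v # map (sh v) xs"
  unfolding rho_def sh_def by simp

lemma rho1': "rho v (Suc 0) xs = v # map (sh v) xs"
  unfolding rho_def sh_def by simp

lemma rho2: "rho v 2 (a # xs) = sh v a # v # map (sh v) xs"
  unfolding rho_def sh_def by simp

lemma filt_sh:
  assumes "v \<le> 2" "k \<ge> 1"
  shows "length (filter (\<lambda>x. Suc k < x) (map (sh v) l)) = length (filter (\<lambda>x. k < x) l)"
proof -
  have "filter (\<lambda>x. Suc k < x) (map (sh v) l) = map (sh v) (filter (\<lambda>x. k < x) l)"
    unfolding filter_map comp_def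
    by (rule arg_cong[where f="map (sh v)"], rule filter_cong) (use assms in \<open>auto simp: sh_def\<close>)
  then show ?thesis by simp
qed

lemma cnt_rho:
  assumes "v \<le> 2" "k \<ge> 1" "j = 1 \<or> j = 2" "xs \<noteq> []"
  shows "cnt (rho v j xs) (Suc k) = cnt xs k"
  using assms(3)
proof
  assume "j = 1"
  then show ?thesis using assms filt_sh[OF assms(1,2), of "take k xs"]
    by (simp add: rho1' cnt_def take_map)
next
  assume "j = 2"
  obtain a t where xs: "xs = a # t" using assms(4) by (cases xs) auto
  obtain k' where k: "k = Suc k'" using assms(2) by (cases k) auto
  have "filter (\<lambda>x. Suc k < x) (take (Suc k) (rho v j xs))
      = filter (\<lambda>x. Suc k < x) (map (sh v) (take k xs))"
    using assms(1) by (simp add: \<open>j = 2\<close> xs k rho2 take_map)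
  then show ?thesis using filt_sh[OF assms(1,2), of "take k xs"]
    by (simp add: cnt_def)
qed

lemma len_rho: "j = 1 \<or> j = 2 \<Longrightarrow> xs \<noteq> [] \<Longrightarrow> length (rho v j xs) = Suc (length xs)"
  by (cases xs) (auto simp: rho1' rho2)

lemma cnt1: "cnt xs 1 \<le> 1"
  unfolding cnt_def by (cases xs) auto

lemma ai_rho:
  assumes "v \<le> 2" "j = 1 \<or> j = 2" "xs \<noteq> []"
  shows "almost_inc1 (rho v j xs) \<longleftrightarrow> almost_inc1 xs"
proof -
  have "(\<forall>i\<in>{1..Suc (length xs)}. cnt (rho v j xs) i \<le> 1) \<longleftrightarrow> (\<forall>k\<in>{1..length xs}. cnt xs k \<le> 1)"
  proof
    assume H: "\<forall>i\<in>{1..Suc (length xs)}. cnt (rho v j xs) i \<le> 1"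
    show "\<forall>k\<in>{1..length xs}. cnt xs k \<le> 1"
    proof
      fix k assume "k \<in> {1..length xs}"
      then show "cnt xs k \<le> 1" using H[rule_format, of "Suc k"] cnt_rho[OF assms(1) _ assms(2,3), of k] by auto
    qed
  next
    assume H: "\<forall>k\<in>{1..length xs}. cnt xs k \<le> 1"
    show "\<forall>i\<in>{1..Suc (length xs)}. cnt (rho v j xs) i \<le> 1"
    proof
      fix i assume i: "i \<in> {1..Suc (length xs)}"
      show "cnt (rho v j xs) i \<le> 1"
      proof (cases "i = 1")
        case True then show ?thesis using cnt1 by simp
      next
        case False
        then obtain k where "i = Suc k" "k \<ge> 1" using i by (cases i) auto
        then show ?thesis using H i cnt_rho[OF assms(1) _ assms(2,3), of k] by auto
      qed
    qed
  qed
  then show ?thesis unfolding ai_cnt using len_rho[OF assms(2,3)] by simp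
qed

lemma sh_img: "v \<in> {1..Suc n} \<Longrightarrow> sh v ` {1..n} = {1..Suc n} - {v}"
proof (rule set_eqI, rule iffI)
  fix y assume "y \<in> sh v ` {1..n}"
  then show "y \<in> {1..Suc n} - {v}" unfolding sh_def by (auto split: if_splits)
next
  fix y assume v: "v \<in> {1..Suc n}" and y: "y \<in> {1..Suc n} - {v}"
  show "y \<in> sh v ` {1..n}"
  proof (cases "y < v")
    case True
    then have "y = sh v y" "y \<in> {1..n}" using v y unfolding sh_def by auto
    then show ?thesis by blast
  next
    case False
    then have "y = sh v (y - 1)" "y - 1 \<in> {1..n}" using v y unfolding sh_def by auto
    then show ?thesis by blast
  qed
qed

lemma inj_sh: "inj (sh v)"
  unfolding inj_def sh_def by auto

lemma perm_rho:
  assumes "perm_S n xs" "v \<in> {1..Suc n}" "j = 1 \<or> j = 2" "xs \<noteq> []"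
  shows "perm_S (Suc n) (rho v j xs)"
proof -
  have s: "set (map (sh v) xs) = {1..Suc n} - {v}" using assms(1) sh_img[OF assms(2)]
    by (simp add: perm_S_def)
  have d: "distinct (map (sh v) xs)" using assms(1) inj_sh by (simp add: perm_S_def distinct_map inj_on_def inj_def)
  show ?thesis using assms(3)
  proof
    assume "j = 1"
    then have r: "rho v j xs = v # map (sh v) xs" using rho1 by simp
    have "length (map (sh v) xs) = n" using assms(1) by (simp add: perm_S_def)
    then show ?thesis unfolding r perm_S_def using s d assms(2) by auto
  next
    assume "j = 2"
    obtain a t where xs: "xs = a # t" using assms(4) by (cases xs) auto
    have r: "rho v j xs = sh v a # v # map (sh v) t" using rho2 \<open>j = 2\<close> xs by simp
    have "length (map (sh v) xs) = n" using assms(1) by (simp add: perm_S_def)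
    then show ?thesis unfolding r perm_S_def using s d assms(2) unfolding xs by auto
  qed
qed

lemma sh_un: "x \<noteq> v \<Longrightarrow> sh v (un v x) = x"
  unfolding sh_def un_def by auto

lemma perm_un:
  assumes "distinct (v # ys)" "set (v # ys) = {1..Suc n}"
  shows "perm_S n (map (un v) ys)" "map (sh v) (map (un v) ys) = ys"
proof -
  have v: "v \<in> {1..Suc n}" using assms by auto
  have sy: "set ys = {1..Suc n} - {v}" using assms by auto
  have inj: "inj_on (un v) (set ys)" unfolding inj_on_def un_def sy by auto
  have "un v ` ({1..Suc n} - {v}) = {1..n}"
  proof (rule set_eqI, rule iffI)
    fix y assume "y \<in> un v ` ({1..Suc n} - {v})"
    then show "y \<in> {1..n}" using v unfolding un_def by (auto split: if_splits)
  next
    fix y assume y: "y \<in> {1..n}"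
    show "y \<in> un v ` ({1..Suc n} - {v})"
    proof (cases "y < v")
      case True
      then have "y = un v y" "y \<in> {1..Suc n} - {v}" using v y unfolding un_def by auto
      then show ?thesis by blast
    next
      case False
      then have "y = un v (Suc y)" "Suc y \<in> {1..Suc n} - {v}" using v y unfolding un_def by auto
      then show ?thesis by blast
    qed
  qed
  moreover have "length ys = n" using assms distinct_card[of "v # ys"] by simp
  ultimately show "perm_S n (map (un v) ys)" using assms inj sy by (auto simp: perm_S_def distinct_map)
  have "\<forall>x\<in>set ys. x \<noteq> v" using assms(1) by auto
  then show "map (sh v) (map (un v) ys) = ys" by (induct ys) (auto simp: sh_un)
qed

theorem theorem7p4:
  fixes n :: nat
  assumes "n \<ge> 1"
  shows "A1 (n + 1) = rho 1 1 ` A1 n \<union> rho 1 2 ` A1 n \<union> rho 2 1 ` A1 n \<union> rho 2 2 ` A1 n"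
proof
  have ne: "xs \<in> A1 n \<Longrightarrow> xs \<noteq> []" for xs using assms by (auto simp: A1_def perm_S_def)
  have gen: "rho v j xs \<in> A1 (n+1)" if "xs \<in> A1 n" "v = 1 \<or> v = 2" "j = 1 \<or> j = 2" for v j xs
  proof -
    have p: "perm_S n xs" "almost_inc1 xs" using that(1) by (simp_all add: A1_def)
    have v: "v \<in> {1..Suc n}" using that(2) assms by auto
    have v2: "v \<le> 2" using that(2) by auto
    have "perm_S (Suc n) (rho v j xs)" using perm_rho[OF p(1) v that(3) ne[OF that(1)]] .
    moreover have "almost_inc1 (rho v j xs)" using ai_rho[OF v2 that(3) ne[OF that(1)]] p(2) by simp
    ultimately show ?thesis by (simp add: A1_def)
  qed
  show "rho 1 1 ` A1 n \<union> rho 1 2 ` A1 n \<union> rho 2 1 ` A1 n \<union> rho 2 2 ` A1 n \<subseteq> A1 (n + 1)"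
    using gen by blast
  show "A1 (n + 1) \<subseteq> rho 1 1 ` A1 n \<union> rho 1 2 ` A1 n \<union> rho 2 1 ` A1 n \<union> rho 2 2 ` A1 n"
  proof
    fix s assume s: "s \<in> A1 (n + 1)"
    then have ps: "perm_S (Suc n) s" and as: "almost_inc1 s" by (simp_all add: A1_def)
    have ls: "length s = Suc n" using ps by (simp add: perm_S_def)
    obtain a b t where st: "s = a # b # t" using ls assms
      by (cases s; cases "tl s") auto
    have ab: "a \<in> {1..Suc n}" "b \<in> {1..Suc n}" using ps st by (auto simp: perm_S_def)
    have "2 \<in> {1..length s}" using ls assms by simp
    then have "cnt s 2 \<le> 1" using as unfolding ai_cnt by blast
    moreover have "cnt s 2 = length (filter (\<lambda>x. 2 < x) [a, b])" by (simp add: st cnt_def)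
    ultimately have "length (filter (\<lambda>x. 2 < x) [a, b]) \<le> 1" by simp
    then have ab2: "a \<in> {1,2} \<or> b \<in> {1,2}" using ab by (auto split: if_splits)
    have key: "s \<in> rho v j ` A1 n" if "v = 1 \<or> v = 2" "j = 1 \<or> j = 2" "s = rho v j xs"
      "perm_S n xs" for v j xs
    proof -
      have "xs \<noteq> []" using that assms by (auto simp: perm_S_def)
      then have "almost_inc1 xs" using ai_rho[of v j xs] that as by auto
      then show ?thesis using that by (auto simp: A1_def)
    qed
    show "s \<in> rho 1 1 ` A1 n \<union> rho 1 2 ` A1 n \<union> rho 2 1 ` A1 n \<union> rho 2 2 ` A1 n"
    proof (cases "a \<in> {1,2}")
      case True
      have d: "distinct (a # (b # t))" "set (a # (b # t)) = {1..Suc n}" using ps st by (auto simp: perm_S_def)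
      note P = perm_un[OF d]
      have eq: "s = rho a 1 (map (un a) (b # t))" using P(2) by (simp add: st rho1')
      have a12: "a = 1 \<or> a = 2" using True by simp
      have "s \<in> rho a 1 ` A1 n" using key[OF a12 _ eq P(1)] by simp
      then show ?thesis using a12 by blast
    next
      case False
      then have b: "b \<in> {1,2}" using ab2 by auto
      have d: "distinct (b # (a # t))" "set (b # (a # t)) = {1..Suc n}" using ps st by (auto simp: perm_S_def)
      note P = perm_un[OF d]
      have "s = rho b 2 (map (un b) (a # t))" using P(2) by (simp add: st rho2)
      note eq = this
      have b12: "b = 1 \<or> b = 2" using b by simp
      have "s \<in> rho b 2 ` A1 n" using key[OF b12 _ eq P(1)] by simp
      then show ?thesis using b12 by blast
    qed
  qed
qed

end
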